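(* Let $n\ge2$. 1) The subgroup of $UB_n$ generated by $\sigma_1,\dots,\sigma_{n-1}$ is isomorphic to the braid group $B_n$ (via $\sigma_i\mapsto\sigma_i$). 2) There exist homomorphisms $\varphi_{US}:UB_n\to SG_n$, $\varphi_{UV}:UB_n\to VB_n$, $\varphi_{UB}:UB_n\to B_n$, given by $\sigma_i\mapsto\sigma_i$ for all three, and $c_i\mapsto\tau_i$, $c_i\mapsto\rho_i$, $c_i\mapsto 1$ respectively. 3) $UB_n$ is an Artin group.
   Context: $B_n$ is the group with generators $\sigma_1,\dots,\sigma_{n-1}$ and relations $\sigma_i\sigma_{i+1}\sigma_i=\sigma_{i+1}\sigma_i\sigma_{i+1}$ ($1\le i\le n-2$), $\sigma_i\sigma_j=\sigma_j\sigma_i$ ($|i-j|\ge2$). The universal braid group $UB_n$ has generators $\sigma_1,\dots,\sigma_{n-1},c_1,\dots,c_{n-1}$ and defining relations: the braid relations above, $c_ic_j=c_jc_i$ ($|i-j|\ge2$), and $c_i\sigma_j=\sigma_jc_i$ ($|i-j|\ge2$). The singular braid group $SG_n$ has generators $\sigma_1,\dots,\sigma_{n-1},\tau_1,\dots,\tau_{n-1}$ and relations: the braid relations, $\tau_i\tau_j=\tau_j\tau_i$ ($|i-j|\ge2$), $\tau_i\sigma_j=\sigma_j\tau_i$ ($|i-j|\ge2$), $\tau_i\sigma_i=\sigma_i\tau_i$, $\sigma_i\sigma_{i+1}\tau_i=\tau_{i+1}\sigma_i\sigma_{i+1}$, $\sigma_{i+1}\sigma_i\tau_{i+1}=\tau_i\sigma_{i+1}\sigma_i$.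 The virtual braid group $VB_n$ has generators $\sigma_1,\dots,\sigma_{n-1},\rho_1,\dots,\rho_{n-1}$ and relations: the braid relations, $\rho_i\rho_{i+1}\rho_i=\rho_{i+1}\rho_i\rho_{i+1}$, $\rho_i\rho_j=\rho_j\rho_i$ ($|i-j|\ge2$), $\rho_i^2=1$, $\sigma_i\rho_j=\rho_j\sigma_i$ ($|i-j|\ge2$), $\rho_i\rho_{i+1}\sigma_i=\sigma_{i+1}\rho_i\rho_{i+1}$. An Artin group is a group given by a presentation with generators $a_i$ ($i\in I$) and, for some pairs $i\ne j$, a relation $a_ia_ja_i\cdots=a_ja_ia_j\cdots$ with both sides alternating words of the same length $m_{ij}\ge2$ (and no other relations). *)

theory Defs
  imports "HOL-Algebra.Algebra"
begin

text \<open>A letter is a generator with a sign (True = positive, False = inverse).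
  Words are lists of letters.\<close>

type_synonym 'a word = "('a \<times> bool) list"

definition words :: "'a set \<Rightarrow> 'a word set" where
  "words S = {w. \<forall>l \<in> set w. fst l \<in> S}"

definition pw :: "'a list \<Rightarrow> 'a word" where
  "pw xs = map (\<lambda>x. (x, True)) xs"

inductive pres_eq :: "('a word \<times> 'a word) set \<Rightarrow> 'a word \<Rightarrow> 'a word \<Rightarrow> bool"
  for R where
  refl: "pres_eq R w w"
| sym: "pres_eq R u v \<Longrightarrow> pres_eq R v u"
| trans: "pres_eq R u v \<Longrightarrow> pres_eq R v w \<Longrightarrow> pres_eq R u w"
| cancel: "pres_eq R (u @ [(x, b), (x, \<not> b)] @ v) (u @ v)"
| rel: "(r, s) \<in> R \<Longrightarrow> pres_eq R (u @ r @ v) (u @ s @ v)"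

definition pres_rel :: "'a set \<Rightarrow> ('a word \<times> 'a word) set \<Rightarrow> ('a word \<times> 'a word) set" where
  "pres_rel S R = {(u, v). u \<in> words S \<and> v \<in> words S \<and> pres_eq R u v}"

definition presented_group :: "'a set \<Rightarrow> ('a word \<times> 'a word) set \<Rightarrow> 'a word set monoid" where
  "presented_group S R =
     \<lparr> carrier = words S // pres_rel S R,
       monoid.mult = (\<lambda>A B. pres_rel S R `` {(SOME u. u \<in> A) @ (SOME v. v \<in> B)}),
       monoid.one = pres_rel S R `` {[]} \<rparr>"

definition pgen :: "'a set \<Rightarrow> ('a word \<times> 'a word) set \<Rightarrow> 'a \<Rightarrow> 'a word set" where
  "pgen S R x = pres_rel S R `` {[(x, True)]}"

definition alt_word :: "'a \<Rightarrow> 'a \<Rightarrow> nat \<Rightarrow> 'a word" where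
  "alt_word a b k = pw (map (\<lambda>i. if even i then a else b) [0..<k])"

text \<open>\<open>m a b \<ge> 2\<close> means the relation \<open>aba\<dots> = bab\<dots>\<close> (length \<open>m a b\<close>) is imposed;
  \<open>m a b < 2\<close> means no relation between a and b.\<close>
definition artin_rels :: "'a set \<Rightarrow> ('a \<Rightarrow> 'a \<Rightarrow> nat) \<Rightarrow> ('a word \<times> 'a word) set" where
  "artin_rels S m = {(alt_word a b (m a b), alt_word b a (m a b)) | a b.
       a \<in> S \<and> b \<in> S \<and> a \<noteq> b \<and> m a b \<ge> 2}"

definition is_artin_group :: "('g, 'b) monoid_scheme \<Rightarrow> bool" where
  "is_artin_group G \<longleftrightarrow> (\<exists>(S :: nat set) m. (\<forall>a b. m a b = m b a) \<and>
       G \<cong> presented_group S (artin_rels S m))"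

text \<open>Sig i = \<sigma>_i; Aux i = c_i, \<tau>_i or \<rho>_i depending on the group.\<close>
datatype gen = Sig nat | Aux nat

definition far :: "nat \<Rightarrow> nat \<Rightarrow> bool" where
  "far i j \<longleftrightarrow> i + 2 \<le> j \<or> j + 2 \<le> i"

definition braid_gens :: "nat \<Rightarrow> gen set" where
  "braid_gens n = Sig ` {1..<n}"

definition two_gens :: "nat \<Rightarrow> gen set" where
  "two_gens n = Sig ` {1..<n} \<union> Aux ` {1..<n}"

definition braid_rels :: "nat \<Rightarrow> (gen word \<times> gen word) set" where
  "braid_rels n =
     {(pw [Sig i, Sig (i+1), Sig i], pw [Sig (i+1), Sig i, Sig (i+1)]) | i. 1 \<le> i \<and> i \<le> n - 2}
   \<union> {(pw [Sig i, Sig j], pw [Sig j, Sig i]) | i j. 1 \<le> i \<and> i < n \<and> 1 \<le> j \<and> j < n \<and> far i j}"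

definition UB_rels :: "nat \<Rightarrow> (gen word \<times> gen word) set" where
  "UB_rels n = braid_rels n
   \<union> {(pw [Aux i, Aux j], pw [Aux j, Aux i]) | i j. 1 \<le> i \<and> i < n \<and> 1 \<le> j \<and> j < n \<and> far i j}
   \<union> {(pw [Aux i, Sig j], pw [Sig j, Aux i]) | i j. 1 \<le> i \<and> i < n \<and> 1 \<le> j \<and> j < n \<and> far i j}"

definition SG_rels :: "nat \<Rightarrow> (gen word \<times> gen word) set" where
  "SG_rels n = UB_rels n
   \<union> {(pw [Aux i, Sig i], pw [Sig i, Aux i]) | i. 1 \<le> i \<and> i < n}
   \<union> {(pw [Sig i, Sig (i+1), Aux i], pw [Aux (i+1), Sig i, Sig (i+1)]) | i. 1 \<le> i \<and> i \<le> n - 2}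
   \<union> {(pw [Sig (i+1), Sig i, Aux (i+1)], pw [Aux i, Sig (i+1), Sig i]) | i. 1 \<le> i \<and> i \<le> n - 2}"

definition VB_rels :: "nat \<Rightarrow> (gen word \<times> gen word) set" where
  "VB_rels n = braid_rels n
   \<union> {(pw [Aux i, Aux (i+1), Aux i], pw [Aux (i+1), Aux i, Aux (i+1)]) | i. 1 \<le> i \<and> i \<le> n - 2}
   \<union> {(pw [Aux i, Aux j], pw [Aux j, Aux i]) | i j. 1 \<le> i \<and> i < n \<and> 1 \<le> j \<and> j < n \<and> far i j}
   \<union> {(pw [Aux i, Aux i], []) | i. 1 \<le> i \<and> i < n}
   \<union> {(pw [Sig i, Aux j], pw [Aux j, Sig i]) | i j. 1 \<le> i \<and> i < n \<and> 1 \<le> j \<and> j < n \<and> far i j}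
   \<union> {(pw [Aux i, Aux (i+1), Sig i], pw [Sig (i+1), Aux i, Aux (i+1)]) | i. 1 \<le> i \<and> i \<le> n - 2}"

definition BG :: "nat \<Rightarrow> gen word set monoid" where
  "BG n = presented_group (braid_gens n) (braid_rels n)"
definition UBG :: "nat \<Rightarrow> gen word set monoid" where
  "UBG n = presented_group (two_gens n) (UB_rels n)"
definition SGG :: "nat \<Rightarrow> gen word set monoid" where
  "SGG n = presented_group (two_gens n) (SG_rels n)"
definition VBG :: "nat \<Rightarrow> gen word set monoid" where
  "VBG n = presented_group (two_gens n) (VB_rels n)"

definition gB :: "nat \<Rightarrow> gen \<Rightarrow> gen word set" where "gB n = pgen (braid_gens n) (braid_rels n)"
definition gU :: "nat \<Rightarrow> gen \<Rightarrow> gen word set" where "gU n = pgen (two_gens n) (UB_rels n)"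
definition gS :: "nat \<Rightarrow> gen \<Rightarrow> gen word set" where "gS n = pgen (two_gens n) (SG_rels n)"
definition gV :: "nat \<Rightarrow> gen \<Rightarrow> gen word set" where "gV n = pgen (two_gens n) (VB_rels n)"

end

theory Submission
  imports Defs
begin


definition inv_wd :: "'a word \<Rightarrow> 'a word" where
  "inv_wd w = rev (map (\<lambda>(x,b). (x, \<not> b)) w)"

definition subst :: "('a \<Rightarrow> 'b word) \<Rightarrow> 'a word \<Rightarrow> 'b word" where
  "subst f w = concat (map (\<lambda>(x,b). if b then f x else inv_wd (f x)) w)"

definition cls :: "'a set \<Rightarrow> ('a word \<times> 'a word) set \<Rightarrow> 'a word \<Rightarrow> 'a word set" where
  "cls S R w = pres_rel S R `` {w}"

lemma subst_append[simp]: "subst f (u @ v) = subst f u @ subst f v"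
  by (simp add: subst_def)
lemma subst_Nil[simp]: "subst f [] = []" by (simp add: subst_def)
lemma subst_Cons[simp]: "subst f ((x,b) # w) = (if b then f x else inv_wd (f x)) @ subst f w"
  by (simp add: subst_def)

lemma inv_wd_simps[simp]: "inv_wd [] = []" "inv_wd ((x,b)#w) = inv_wd w @ [(x, \<not> b)]"
  "inv_wd (u @ v) = inv_wd v @ inv_wd u"
  by (auto simp: inv_wd_def)

lemma words_append[simp]: "u @ v \<in> words S \<longleftrightarrow> u \<in> words S \<and> v \<in> words S"
  by (auto simp: words_def)
lemma words_Nil[simp]: "[] \<in> words S" by (simp add: words_def)
lemma words_Cons[simp]: "(x,b) # w \<in> words S \<longleftrightarrow> x \<in> S \<and> w \<in> words S"
  by (auto simp: words_def)
lemma words_inv[simp]: "inv_wd w \<in> words S \<longleftrightarrow> w \<in> words S"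
  by (auto simp: words_def inv_wd_def)

lemma subst_words:
  assumes "\<And>x. x \<in> S \<Longrightarrow> f x \<in> words S'" "w \<in> words S"
  shows "subst f w \<in> words S'"
  using assms(2) by (induction w) (auto simp: assms(1))

lemma pres_eq_ctx: "pres_eq R u v \<Longrightarrow> pres_eq R (p @ u @ q) (p @ v @ q)"
proof (induction rule: pres_eq.induct)
  case (refl w) then show ?case by (rule pres_eq.refl)
next
  case (sym u v) show ?case using sym.IH by (rule pres_eq.sym)
next
  case (trans u v w) then show ?case by (metis pres_eq.trans)
next
  case (cancel u x b v) then show ?case
    using pres_eq.cancel[of R "p @ u" x b "v @ q"] by simp
next
  case (rel r s u v) then show ?case
    using pres_eq.rel[of r s R "p @ u" "v @ q"] by simp
qed

lemma pres_eq_app: "pres_eq R u v \<Longrightarrow> pres_eq R u' v' \<Longrightarrow> pres_eq R (u @ u') (v @ v')"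
  by (metis append_Nil append_Nil2 pres_eq.trans pres_eq_ctx)

lemma pres_eq_relI: "(r, s) \<in> R \<Longrightarrow> pres_eq R r s"
  using pres_eq.rel[of r s R "[]" "[]"] by simp

lemma pres_eq_cancel1: "pres_eq R ((x,b) # (x, \<not> b) # v) v"
  using pres_eq.cancel[of R "[]" x b v] by simp

lemma pres_eq_inv_r: "pres_eq R (w @ inv_wd w) []"
proof (induction w)
  case Nil then show ?case by (simp add: pres_eq.refl)
next
  case (Cons a w)
  obtain x b where a: "a = (x,b)" by force
  have "pres_eq R ([(x,b)] @ (w @ inv_wd w) @ [(x, \<not> b)]) ([(x,b)] @ [] @ [(x, \<not> b)])"
    by (rule pres_eq_ctx[OF Cons])
  then have "pres_eq R ((x,b) # w @ inv_wd w @ [(x, \<not> b)]) [(x,b),(x,\<not>b)]" by simp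
  moreover have "pres_eq R [(x,b),(x,\<not>b)] []" using pres_eq_cancel1[of R x b "[]"] by simp
  ultimately show ?case using a by (auto intro: pres_eq.trans)
qed

lemma pres_eq_inv_l: "pres_eq R (inv_wd w @ w) []"
proof (induction w)
  case Nil then show ?case by (simp add: pres_eq.refl)
next
  case (Cons a w)
  obtain x b where a: "a = (x,b)" by force
  have "pres_eq R (inv_wd w @ [(x, \<not> b), (x, \<not>\<not> b)] @ w) (inv_wd w @ w)"
    by (rule pres_eq.cancel)
  then show ?case using a Cons by (auto intro: pres_eq.trans)
qed

lemma pres_eq_subst:
  assumes rels: "\<And>r s. (r, s) \<in> R \<Longrightarrow> pres_eq R' (subst f r) (subst f s)"
  shows "pres_eq R u v \<Longrightarrow> pres_eq R' (subst f u) (subst f v)"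
proof (induction rule: pres_eq.induct)
  case (refl w) then show ?case by (rule pres_eq.refl)
next
  case (sym u v) show ?case using sym.IH by (rule pres_eq.sym)
next
  case (trans u v w) then show ?case by (metis pres_eq.trans)
next
  case (cancel u x b v)
  have "pres_eq R' (subst f [(x, b), (x, \<not> b)]) []"
    using pres_eq_inv_r[of R' "f x"] pres_eq_inv_l[of R' "f x"] by (cases b) auto
  then have "pres_eq R' (subst f u @ subst f [(x, b), (x, \<not> b)] @ subst f v) (subst f u @ [] @ subst f v)"
    by (rule pres_eq_ctx)
  then show ?case by simp
next
  case (rel r s u v)
  then show ?case using pres_eq_ctx[OF rels[OF rel(1)], of "subst f u" "subst f v"] by simp
qed

lemma equiv_pres: "equiv (words S) (pres_rel S R)"
  unfolding equiv_def refl_on_def sym_def trans_def pres_rel_def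
  by (auto intro: pres_eq.refl pres_eq.sym pres_eq.trans)

lemma cls_eq_iff: "u \<in> words S \<Longrightarrow> v \<in> words S \<Longrightarrow> cls S R u = cls S R v \<longleftrightarrow> pres_eq R u v"
  unfolding cls_def using equiv_class_eq_iff[OF equiv_pres, of u v S R]
  by (auto simp: pres_rel_def)

lemma cls_carrier: "w \<in> words S \<Longrightarrow> cls S R w \<in> carrier (presented_group S R)"
  by (auto simp: cls_def presented_group_def quotientI)

lemma carrier_cls: "A \<in> carrier (presented_group S R) \<Longrightarrow> \<exists>w \<in> words S. A = cls S R w"
  by (auto simp: cls_def presented_group_def elim!: quotientE)

lemma some_cls: assumes "w \<in> words S"
  shows "(SOME u. u \<in> cls S R w) \<in> words S \<and> pres_eq R w (SOME u. u \<in> cls S R w)"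
proof -
  have "w \<in> cls S R w" using assms by (auto simp: cls_def pres_rel_def pres_eq.refl)
  then have "(SOME u. u \<in> cls S R w) \<in> cls S R w" by (rule someI)
  then show ?thesis by (auto simp: cls_def pres_rel_def)
qed

lemma mult_cls: assumes "u \<in> words S" "v \<in> words S"
  shows "cls S R u \<otimes>\<^bsub>presented_group S R\<^esub> cls S R v = cls S R (u @ v)"
proof -
  let ?a = "SOME x. x \<in> cls S R u" and ?b = "SOME x. x \<in> cls S R v"
  have "?a \<in> words S" "pres_eq R u ?a" "?b \<in> words S" "pres_eq R v ?b"
    using some_cls[OF assms(1)] some_cls[OF assms(2)] by auto
  then have "cls S R (?a @ ?b) = cls S R (u @ v)"
    using assms by (subst cls_eq_iff) (auto intro: pres_eq.sym pres_eq_app)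
  then show ?thesis by (simp add: presented_group_def cls_def)
qed

lemma one_cls: "\<one>\<^bsub>presented_group S R\<^esub> = cls S R []"
  by (simp add: presented_group_def cls_def)

lemma group_pres: "group (presented_group S R)"
proof (rule groupI)
  fix x y assume "x \<in> carrier (presented_group S R)" "y \<in> carrier (presented_group S R)"
  then show "x \<otimes>\<^bsub>presented_group S R\<^esub> y \<in> carrier (presented_group S R)"
    by (auto dest!: carrier_cls simp: mult_cls cls_carrier)
next
  show "\<one>\<^bsub>presented_group S R\<^esub> \<in> carrier (presented_group S R)"
    by (simp add: one_cls cls_carrier)
next
  fix x y z assume "x \<in> carrier (presented_group S R)" "y \<in> carrier (presented_group S R)"
     "z \<in> carrier (presented_group S R)"
  then show "x \<otimes>\<^bsub>presented_group S R\<^esub> y \<otimes>\<^bsub>presented_group S R\<^esub> z =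
           x \<otimes>\<^bsub>presented_group S R\<^esub> (y \<otimes>\<^bsub>presented_group S R\<^esub> z)"
    by (auto dest!: carrier_cls simp: mult_cls)
next
  fix x assume "x \<in> carrier (presented_group S R)"
  then show "\<one>\<^bsub>presented_group S R\<^esub> \<otimes>\<^bsub>presented_group S R\<^esub> x = x"
    by (auto dest!: carrier_cls simp: mult_cls one_cls)
next
  fix x assume "x \<in> carrier (presented_group S R)"
  then obtain w where w: "w \<in> words S" "x = cls S R w" by (auto dest!: carrier_cls)
  then have "cls S R (inv_wd w) \<otimes>\<^bsub>presented_group S R\<^esub> x = \<one>\<^bsub>presented_group S R\<^esub>"
    by (simp add: mult_cls one_cls cls_eq_iff pres_eq_inv_l)
  then show "\<exists>y\<in>carrier (presented_group S R). y \<otimes>\<^bsub>presented_group S R\<^esub> x = \<one>\<^bsub>presented_group S R\<^esub>"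
    using w by (auto intro!: bexI cls_carrier)
qed

lemma inv_cls: "w \<in> words S \<Longrightarrow> inv\<^bsub>presented_group S R\<^esub> (cls S R w) = cls S R (inv_wd w)"
  by (rule group.inv_equality[OF group_pres])
     (simp_all add: mult_cls one_cls cls_eq_iff pres_eq_inv_l cls_carrier)

definition ind :: "'a set \<Rightarrow> ('a word \<times> 'a word) set \<Rightarrow> 'b set \<Rightarrow> ('b word \<times> 'b word) set \<Rightarrow>
   ('a \<Rightarrow> 'b word) \<Rightarrow> 'a word set \<Rightarrow> 'b word set" where
  "ind S R S' R' f A = cls S' R' (subst f (SOME u. u \<in> A))"

locale substhom =
  fixes S R S' R' f
  assumes gens: "\<And>x. x \<in> S \<Longrightarrow> f x \<in> words S'"
    and rels: "\<And>r s. (r, s) \<in> R \<Longrightarrow> pres_eq R' (subst f r) (subst f s)"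
begin

lemma ind_cls: "w \<in> words S \<Longrightarrow> ind S R S' R' f (cls S R w) = cls S' R' (subst f w)"
  unfolding ind_def using some_cls[of w S R]
  by (subst cls_eq_iff) (auto intro: subst_words gens pres_eq.sym pres_eq_subst rels)

lemma ind_hom: "ind S R S' R' f \<in> hom (presented_group S R) (presented_group S' R')"
proof (rule homI)
  fix x assume "x \<in> carrier (presented_group S R)"
  then obtain w where w: "w \<in> words S" "x = cls S R w" by (auto dest!: carrier_cls)
  have "subst f w \<in> words S'" using w by (auto intro: subst_words gens)
  then show "ind S R S' R' f x \<in> carrier (presented_group S' R')"
    using w by (simp add: ind_cls cls_carrier)
next
  fix x y assume "x \<in> carrier (presented_group S R)" "y \<in> carrier (presented_group S R)"
  then obtain u v where w: "u \<in> words S" "x = cls S R u" "v \<in> words S" "y = cls S R v"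
    by (auto dest!: carrier_cls)
  have "subst f u \<in> words S'" "subst f v \<in> words S'" using w by (auto intro: subst_words gens)
  then show "ind S R S' R' f (x \<otimes>\<^bsub>presented_group S R\<^esub> y) =
    ind S R S' R' f x \<otimes>\<^bsub>presented_group S' R'\<^esub> ind S R S' R' f y"
    using w by (simp add: mult_cls ind_cls)
qed

end

lemma subst_single: "subst (\<lambda>x. [(g x, True)]) w = map (\<lambda>(x,b). (g x, b)) w"
  by (induction w) auto

lemma subst_id_on: "(\<And>x. x \<in> fst ` set w \<Longrightarrow> f x = [(x, True)]) \<Longrightarrow> subst f w = w"
  by (induction w) auto



definition idf :: "gen \<Rightarrow> gen word" where "idf x = [(x, True)]"
fun delA :: "gen \<Rightarrow> gen word" where
  "delA (Sig i) = [(Sig i, True)]" | "delA (Aux i) = []"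

lemma subst_idf[simp]: "subst idf w = w"
  using subst_single[of id w] by (simp add: idf_def[abs_def] case_prod_beta)

lemma subst_pw[simp]: "subst f (pw xs) = concat (map f xs)"
  by (induction xs) (auto simp: pw_def)

lemma pgen_cls: "pgen S R x = cls S R [(x, True)]"
  by (simp add: pgen_def cls_def)

lemma UB_SG_rels: "(r, s) \<in> UB_rels n \<Longrightarrow> (r, s) \<in> SG_rels n"
  by (simp add: SG_rels_def)

lemma UB_VB_rels: assumes "(r, s) \<in> UB_rels n" shows "(r, s) \<in> VB_rels n \<or> (s, r) \<in> VB_rels n"
proof -
  let ?A = "{(pw [Aux i, Aux j], pw [Aux j, Aux i]) |i j. 1 \<le> i \<and> i < n \<and> 1 \<le> j \<and> j < n \<and> far i j}"
  let ?B = "{(pw [Sig i, Aux j], pw [Aux j, Sig i]) |i j. 1 \<le> i \<and> i < n \<and> 1 \<le> j \<and> j < n \<and> far i j}"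
  have "(r, s) \<in> braid_rels n \<or> (r, s) \<in> ?A \<or> (s, r) \<in> ?B"
    using assms unfolding UB_rels_def by (auto simp: far_def)
  then show ?thesis unfolding VB_rels_def by blast
qed

lemma UB_B_rels: "(r, s) \<in> UB_rels n \<Longrightarrow> pres_eq (braid_rels n) (subst delA r) (subst delA s)"
  unfolding UB_rels_def
proof (elim UnE)
  assume "(r, s) \<in> braid_rels n"
  moreover have "subst delA r = r \<and> subst delA s = s" using calculation
    by (auto simp: braid_rels_def pw_def)
  ultimately show ?thesis by (simp add: pres_eq_relI)
qed (auto simp: pw_def intro: pres_eq.refl)

lemma sig_words: "i \<in> {1..<n} \<Longrightarrow> [(Sig i, b)] \<in> words (two_gens n)"
  by (auto simp: two_gens_def)
lemma aux_words: "i \<in> {1..<n} \<Longrightarrow> [(Aux i, b)] \<in> words (two_gens n)"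
  by (auto simp: two_gens_def)

lemma part_SG: "\<exists>\<phi>. \<phi> \<in> hom (UBG n) (SGG n)
             \<and> (\<forall>i \<in> {1..<n}. \<phi> (gU n (Sig i)) = gS n (Sig i) \<and> \<phi> (gU n (Aux i)) = gS n (Aux i))"
proof -
  interpret substhom "two_gens n" "UB_rels n" "two_gens n" "SG_rels n" idf
    by unfold_locales (auto simp: idf_def two_gens_def intro: pres_eq_relI UB_SG_rels)
  show ?thesis
    by (rule exI[of _ "ind (two_gens n) (UB_rels n) (two_gens n) (SG_rels n) idf"])
       (simp add: idf_def ind_hom UBG_def SGG_def gU_def gS_def pgen_cls ind_cls[OF sig_words] ind_cls[OF aux_words] del: atLeastLessThan_iff)
qed

lemma part_VB: "\<exists>\<phi>. \<phi> \<in> hom (UBG n) (VBG n)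
             \<and> (\<forall>i \<in> {1..<n}. \<phi> (gU n (Sig i)) = gV n (Sig i) \<and> \<phi> (gU n (Aux i)) = gV n (Aux i))"
proof -
  interpret substhom "two_gens n" "UB_rels n" "two_gens n" "VB_rels n" idf
    by unfold_locales (auto simp: idf_def two_gens_def dest!: UB_VB_rels intro: pres_eq_relI pres_eq.sym)
  show ?thesis
    by (rule exI[of _ "ind (two_gens n) (UB_rels n) (two_gens n) (VB_rels n) idf"])
       (simp add: idf_def ind_hom UBG_def VBG_def gU_def gV_def pgen_cls ind_cls[OF sig_words] ind_cls[OF aux_words] del: atLeastLessThan_iff)
qed

interpretation UBB: substhom "two_gens n" "UB_rels n" "braid_gens n" "braid_rels n" delA
  by unfold_locales (auto simp: two_gens_def braid_gens_def intro: UB_B_rels)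

lemma part_B: "\<exists>\<phi>. \<phi> \<in> hom (UBG n) (BG n)
             \<and> (\<forall>i \<in> {1..<n}. \<phi> (gU n (Sig i)) = gB n (Sig i) \<and> \<phi> (gU n (Aux i)) = \<one>\<^bsub>BG n\<^esub>)"
  by (rule exI[of _ "ind (two_gens n) (UB_rels n) (braid_gens n) (braid_rels n) delA"])
     (simp add: UBB.ind_hom UBG_def BG_def gU_def gB_def pgen_cls UBB.ind_cls[OF sig_words] UBB.ind_cls[OF aux_words] one_cls del: atLeastLessThan_iff)



interpretation BUB: substhom "braid_gens n" "braid_rels n" "two_gens n" "UB_rels n" idf
  by unfold_locales (auto simp: idf_def two_gens_def braid_gens_def UB_rels_def intro: pres_eq_relI)

lemma words_braid_two: "w \<in> words (braid_gens n) \<Longrightarrow> w \<in> words (two_gens n)"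
  by (auto simp: words_def braid_gens_def two_gens_def)

lemma delA_braid: "w \<in> words (braid_gens n) \<Longrightarrow> subst delA w = w"
  by (rule subst_id_on) (auto simp: words_def braid_gens_def)

lemma part_iso:
  "\<exists>h. h \<in> iso (BG n) (subgroup_generated (UBG n) (gU n ` Sig ` {1..<n}))
             \<and> (\<forall>i \<in> {1..<n}. h (gB n (Sig i)) = gU n (Sig i))"
proof -
  let ?h = "ind (braid_gens n) (braid_rels n) (two_gens n) (UB_rels n) idf"
  let ?p = "ind (two_gens n) (UB_rels n) (braid_gens n) (braid_rels n) delA"
  let ?X = "gU n ` Sig ` {1..<n}"
  have hhom: "?h \<in> hom (BG n) (UBG n)" unfolding BG_def UBG_def by (rule BUB.ind_hom)
  have ghom: "group_hom (BG n) (UBG n) ?h"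
    by (rule group_hom.intro) (auto simp: BG_def UBG_def group_pres group_hom_axioms_def
        intro: BUB.ind_hom)
  have hcls: "?h (cls (braid_gens n) (braid_rels n) w) = cls (two_gens n) (UB_rels n) w"
    if "w \<in> words (braid_gens n)" for w
    using that by (simp add: BUB.ind_cls)
  have left: "?p (?h A) = A" if AC: "A \<in> carrier (BG n)" for A
  proof -
    obtain w where w: "w \<in> words (braid_gens n)" "A = cls (braid_gens n) (braid_rels n) w"
      using AC carrier_cls[of A "braid_gens n" "braid_rels n"] by (auto simp: BG_def)
    then show ?thesis using words_braid_two[OF w(1)]
      by (simp add: hcls UBB.ind_cls delA_braid)
  qed
  have inj: "inj_on ?h (carrier (BG n))"
    by (rule inj_on_inverseI[of _ ?p]) (rule left)
  have gens: "gB n (Sig i) \<in> carrier (BG n) \<and> ?h (gB n (Sig i)) = gU n (Sig i)" if "i \<in> {1..<n}" for i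
  proof -
    have "[(Sig i, True)] \<in> words (braid_gens n)" using that by (simp add: braid_gens_def)
    then show ?thesis
      by (simp add: gB_def gU_def pgen_cls hcls BG_def cls_carrier)
  qed
  have Xc: "?X \<subseteq> carrier (UBG n)"
    using gens hom_in_carrier[OF hhom] by force
  have img_sub: "?h ` carrier (BG n) \<subseteq> generate (UBG n) (carrier (UBG n) \<inter> ?X)"
  proof
    fix y assume "y \<in> ?h ` carrier (BG n)"
    then obtain A where A: "A \<in> carrier (BG n)" "y = ?h A" by blast
    then obtain w where w0: "w \<in> words (braid_gens n)" "A = cls (braid_gens n) (braid_rels n) w"
      using carrier_cls[of A "braid_gens n" "braid_rels n"] by (auto simp: BG_def)
    then have w: "w \<in> words (braid_gens n)" "y = cls (two_gens n) (UB_rels n) w"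
      using A hcls by auto
    have "cls (two_gens n) (UB_rels n) w \<in> generate (UBG n) (carrier (UBG n) \<inter> ?X)"
      using w(1)
    proof (induction w)
      case Nil then show ?case by (metis UBG_def generate.one one_cls)
    next
      case (Cons a w)
      obtain x b where a: "a = (x, b)" by force
      with Cons.prems obtain i where i: "i \<in> {1..<n}" "x = Sig i" "w \<in> words (braid_gens n)"
        by (auto simp: braid_gens_def)
      have ww: "w \<in> words (two_gens n)" using i(3) by (rule words_braid_two)
      have xw: "[(x, True)] \<in> words (two_gens n)" using i by (simp add: two_gens_def)
      have gx: "cls (two_gens n) (UB_rels n) [(x, True)] \<in> carrier (UBG n) \<inter> ?X"
        using i gens Xc by (auto simp: gU_def pgen_cls)
      have "cls (two_gens n) (UB_rels n) [(x, b)] \<in> generate (UBG n) (carrier (UBG n) \<inter> ?X)"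
      proof (cases b)
        case True then show ?thesis using gx by (auto intro: generate.incl)
      next
        case False
        have "inv\<^bsub>UBG n\<^esub> (cls (two_gens n) (UB_rels n) [(x, True)]) = cls (two_gens n) (UB_rels n) [(x, b)]"
          using xw False by (simp add: UBG_def inv_cls)
        then show ?thesis using gx by (metis generate.inv)
      qed
      moreover have "cls (two_gens n) (UB_rels n) ((x, b) # w) =
         cls (two_gens n) (UB_rels n) [(x, b)] \<otimes>\<^bsub>UBG n\<^esub> cls (two_gens n) (UB_rels n) w"
        using xw ww by (simp add: UBG_def mult_cls)
      ultimately show ?case using Cons.IH[OF i(3)] a by (metis generate.eng)
    qed
    then show "y \<in> generate (UBG n) (carrier (UBG n) \<inter> ?X)" using w by simp
  qed
  have sub_img: "generate (UBG n) (carrier (UBG n) \<inter> ?X) \<subseteq> ?h ` carrier (BG n)"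
  proof (rule group.generate_subgroup_incl)
    show "group (UBG n)" by (simp add: UBG_def group_pres)
    show "subgroup (?h ` carrier (BG n)) (UBG n)" by (rule group_hom.img_is_subgroup[OF ghom])
    show "carrier (UBG n) \<inter> ?X \<subseteq> ?h ` carrier (BG n)"
      using gens by (force simp del: atLeastLessThan_iff)
  qed
  have img: "?h ` carrier (BG n) = carrier (subgroup_generated (UBG n) ?X)"
    using img_sub sub_img by (simp add: carrier_subgroup_generated)
  have "?h \<in> hom (BG n) (subgroup_generated (UBG n) ?X)"
    using hhom img unfolding hom_def by (auto simp: subgroup_generated_def)
  then have "?h \<in> iso (BG n) (subgroup_generated (UBG n) ?X)"
    using inj img by (auto intro: isoI simp: bij_betw_def)
  then show ?thesis using gens by blast
qed



fun enc :: "gen \<Rightarrow> nat" where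
  "enc (Sig i) = 2 * i" | "enc (Aux i) = 2 * i + 1"
definition dec :: "nat \<Rightarrow> gen" where
  "dec y = (if even y then Sig (y div 2) else Aux (y div 2))"

lemma dec_enc[simp]: "dec (enc x) = x"
  by (cases x) (auto simp: dec_def)
lemma enc_dec[simp]: "enc (dec y) = y"
  by (auto simp: dec_def)

fun mg :: "gen \<Rightarrow> gen \<Rightarrow> nat" where
  "mg (Sig i) (Sig j) = (if i + 1 = j \<or> j + 1 = i then 3 else if far i j then 2 else 0)"
| "mg (Aux i) (Aux j) = (if far i j then 2 else 0)"
| "mg (Sig i) (Aux j) = (if far i j then 2 else 0)"
| "mg (Aux i) (Sig j) = (if far i j then 2 else 0)"

lemma mg_sym: "mg x y = mg y x"
  by (cases x; cases y) (auto simp: far_def)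

definition mA :: "nat \<Rightarrow> nat \<Rightarrow> nat" where "mA a b = mg (dec a) (dec b)"

lemma alt2: "alt_word a b 2 = pw [a, b]"
  by (simp add: alt_word_def pw_def numeral_2_eq_2)
lemma alt3: "alt_word a b 3 = pw [a, b, a]"
  by (simp add: alt_word_def pw_def numeral_3_eq_3)

lemma subst_alt: "subst (\<lambda>y. [(g y, True)]) (alt_word a b k) = alt_word (g a) (g b) k"
  by (simp add: subst_single alt_word_def pw_def)

lemma subst_pw_single: "subst (\<lambda>y. [(g y, True)]) (pw xs) = pw (map g xs)"
  by (simp add: subst_single pw_def)

lemma artin_mem:
  assumes "x \<in> two_gens n" "y \<in> two_gens n" "x \<noteq> y" "mg x y = k" "k \<ge> 2"
  shows "(alt_word (enc x) (enc y) k, alt_word (enc y) (enc x) k) \<in> artin_rels (enc ` two_gens n) mA"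
  unfolding artin_rels_def using assms
  by (intro CollectI exI[of _ "enc x"] exI[of _ "enc y"]) (auto simp: mA_def dest: arg_cong[of _ _ dec])

lemma UB_to_artin:
  assumes "(r, s) \<in> UB_rels n"
  shows "pres_eq (artin_rels (enc ` two_gens n) mA) (subst (\<lambda>x. [(enc x, True)]) r) (subst (\<lambda>x. [(enc x, True)]) s)"
  using assms unfolding UB_rels_def braid_rels_def
proof (elim UnE CollectE exE conjE)
  fix i assume h: "(r, s) = (pw [Sig i, Sig (i + 1), Sig i], pw [Sig (i + 1), Sig i, Sig (i + 1)])"
    "1 \<le> i" "i \<le> n - 2"
  have "(alt_word (enc (Sig i)) (enc (Sig (i+1))) 3, alt_word (enc (Sig (i+1))) (enc (Sig i)) 3)
     \<in> artin_rels (enc ` two_gens n) mA"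
    by (rule artin_mem) (use h in \<open>auto simp: two_gens_def\<close>)
  then show ?thesis using h by (simp add: subst_pw_single alt3 pres_eq_relI del: enc.simps subst_pw)
next
  fix i j assume h: "(r, s) = (pw [Sig i, Sig j], pw [Sig j, Sig i])" "1 \<le> i" "i < n" "1 \<le> j" "j < n" "far i j"
  have "(alt_word (enc (Sig i)) (enc (Sig j)) 2, alt_word (enc (Sig j)) (enc (Sig i)) 2)
     \<in> artin_rels (enc ` two_gens n) mA"
    by (rule artin_mem) (use h in \<open>auto simp: two_gens_def far_def\<close>)
  then show ?thesis using h by (simp add: subst_pw_single alt2 pres_eq_relI del: enc.simps subst_pw)
next
  fix i j assume h: "(r, s) = (pw [Aux i, Aux j], pw [Aux j, Aux i])" "1 \<le> i" "i < n" "1 \<le> j" "j < n" "far i j"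
  have "(alt_word (enc (Aux i)) (enc (Aux j)) 2, alt_word (enc (Aux j)) (enc (Aux i)) 2)
     \<in> artin_rels (enc ` two_gens n) mA"
    by (rule artin_mem) (use h in \<open>auto simp: two_gens_def far_def\<close>)
  then show ?thesis using h by (simp add: subst_pw_single alt2 pres_eq_relI del: enc.simps subst_pw)
next
  fix i j assume h: "(r, s) = (pw [Aux i, Sig j], pw [Sig j, Aux i])" "1 \<le> i" "i < n" "1 \<le> j" "j < n" "far i j"
  have "(alt_word (enc (Aux i)) (enc (Sig j)) 2, alt_word (enc (Sig j)) (enc (Aux i)) 2)
     \<in> artin_rels (enc ` two_gens n) mA"
    by (rule artin_mem) (use h in \<open>auto simp: two_gens_def far_def\<close>)
  then show ?thesis using h by (simp add: subst_pw_single alt2 pres_eq_relI del: enc.simps subst_pw)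
qed

lemma rel_UB: "(r, s) \<in> UB_rels n \<Longrightarrow> pres_eq (UB_rels n) r s"
  by (rule pres_eq_relI)
lemma rel_UB': "(r, s) \<in> UB_rels n \<Longrightarrow> pres_eq (UB_rels n) s r"
  by (rule pres_eq.sym, rule pres_eq_relI)

lemma artin_to_UB_gen:
  assumes "x \<in> two_gens n" "y \<in> two_gens n" "x \<noteq> y" "mg x y \<ge> 2"
  shows "pres_eq (UB_rels n) (alt_word x y (mg x y)) (alt_word y x (mg x y))"
proof -
  obtain i where i: "x = Sig i \<or> x = Aux i" "1 \<le> i" "i < n" using assms(1) by (auto simp: two_gens_def)
  obtain j where j: "y = Sig j \<or> y = Aux j" "1 \<le> j" "j < n" using assms(2) by (auto simp: two_gens_def)
  show ?thesis
  proof (cases "x = Sig i")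
    case xs: True
    show ?thesis
    proof (cases "y = Sig j")
      case ys: True
      show ?thesis
      proof (cases "i + 1 = j")
        case True
        then have "(pw [Sig i, Sig j, Sig i], pw [Sig j, Sig i, Sig j]) \<in> UB_rels n"
          using i j unfolding UB_rels_def braid_rels_def by auto
        then show ?thesis using xs ys True by (simp add: alt3 rel_UB)
      next
        case f1: False
        show ?thesis
        proof (cases "j + 1 = i")
          case True
          then have "(pw [Sig j, Sig i, Sig j], pw [Sig i, Sig j, Sig i]) \<in> UB_rels n"
            using i j unfolding UB_rels_def braid_rels_def by auto
          then show ?thesis using xs ys True by (simp add: alt3 rel_UB')
        next
          case False
          then have "far i j" using assms(4) xs ys f1 by (auto split: if_splits)
          then have "(pw [Sig i, Sig j], pw [Sig j, Sig i]) \<in> UB_rels n"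
            using i j unfolding UB_rels_def braid_rels_def by auto
          then show ?thesis using xs ys False f1 \<open>far i j\<close> by (simp add: alt2 rel_UB)
        qed
      qed
    next
      case False
      then have ys: "y = Aux j" using j by auto
      then have "far i j" using assms(4) xs by (auto split: if_splits)
      then have "(pw [Aux j, Sig i], pw [Sig i, Aux j]) \<in> UB_rels n"
        using i j unfolding UB_rels_def by (auto simp: far_def)
      then show ?thesis using xs ys \<open>far i j\<close> by (simp add: alt2 rel_UB')
    qed
  next
    case False
    then have xs: "x = Aux i" using i by auto
    show ?thesis
    proof (cases "y = Sig j")
      case ys: True
      then have "far i j" using assms(4) xs by (auto split: if_splits)
      then have "(pw [Aux i, Sig j], pw [Sig j, Aux i]) \<in> UB_rels n"
        using i j unfolding UB_rels_def by (auto simp: far_def)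
      then show ?thesis using xs ys \<open>far i j\<close> by (simp add: alt2 rel_UB)
    next
      case False
      then have ys: "y = Aux j" using j by auto
      then have "far i j" using assms(4) xs by (auto split: if_splits)
      then have "(pw [Aux i, Aux j], pw [Aux j, Aux i]) \<in> UB_rels n"
        using i j unfolding UB_rels_def by (auto simp: far_def)
      then show ?thesis using xs ys \<open>far i j\<close> by (simp add: alt2 rel_UB)
    qed
  qed
qed

lemma artin_to_UB:
  assumes "(r, s) \<in> artin_rels (enc ` two_gens n) mA"
  shows "pres_eq (UB_rels n) (subst (\<lambda>y. [(dec y, True)]) r) (subst (\<lambda>y. [(dec y, True)]) s)"
proof -
  obtain a b where ab: "r = alt_word a b (mA a b)" "s = alt_word b a (mA a b)"
    "a \<in> enc ` two_gens n" "b \<in> enc ` two_gens n" "a \<noteq> b" "mA a b \<ge> 2"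
    using assms unfolding artin_rels_def by blast
  then obtain x y where xy: "a = enc x" "b = enc y" "x \<in> two_gens n" "y \<in> two_gens n" by blast
  have "x \<noteq> y" using ab xy by auto
  moreover have "mA a b = mg x y" using xy by (simp add: mA_def)
  ultimately show ?thesis using ab xy artin_to_UB_gen[of x n y]
    by (simp add: subst_alt)
qed

lemma map_enc_dec[simp]: "map ((\<lambda>(y, b). (dec y, b)) \<circ> (\<lambda>(x, b). (enc x, b))) w = w"
  by (induction w) auto
lemma map_dec_enc[simp]: "map ((\<lambda>(y, b). (enc y, b)) \<circ> (\<lambda>(x, b). (dec x, b))) w = w"
  by (induction w) auto

lemma part_artin: "is_artin_group (UBG n)"
proof -
  let ?SA = "enc ` two_gens n"
  let ?f = "\<lambda>x. [(enc x, True)]" and ?g = "\<lambda>y. [(dec y, True)]"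
  interpret F: substhom "two_gens n" "UB_rels n" ?SA "artin_rels ?SA mA" ?f
    by unfold_locales (auto intro: UB_to_artin)
  interpret G: substhom ?SA "artin_rels ?SA mA" "two_gens n" "UB_rels n" ?g
    by unfold_locales (auto intro: artin_to_UB)
  let ?F = "ind (two_gens n) (UB_rels n) ?SA (artin_rels ?SA mA) ?f"
  let ?G = "ind ?SA (artin_rels ?SA mA) (two_gens n) (UB_rels n) ?g"
  have "group_isomorphisms (UBG n) (presented_group ?SA (artin_rels ?SA mA)) ?F ?G"
    unfolding group_isomorphisms_def
  proof (intro conjI ballI)
    show "?F \<in> hom (UBG n) (presented_group ?SA (artin_rels ?SA mA))"
      unfolding UBG_def by (rule F.ind_hom)
    show "?G \<in> hom (presented_group ?SA (artin_rels ?SA mA)) (UBG n)"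
      unfolding UBG_def by (rule G.ind_hom)
  next
    fix A assume A: "A \<in> carrier (UBG n)"
    obtain w where w: "w \<in> words (two_gens n)" "A = cls (two_gens n) (UB_rels n) w"
      using A carrier_cls[of A "two_gens n" "UB_rels n"] by (auto simp: UBG_def)
    have "subst ?f w \<in> words ?SA" by (rule subst_words[OF _ w(1)]) auto
    then show "?G (?F A) = A" using w
      by (simp add: F.ind_cls G.ind_cls subst_single case_prod_beta)
  next
    fix A assume A: "A \<in> carrier (presented_group ?SA (artin_rels ?SA mA))"
    obtain w where w: "w \<in> words ?SA" "A = cls ?SA (artin_rels ?SA mA) w"
      using A carrier_cls[of A ?SA "artin_rels ?SA mA"] by auto
    have "subst ?g w \<in> words (two_gens n)" by (rule subst_words[OF _ w(1)]) auto
    then show "?F (?G A) = A" using w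
      by (simp add: F.ind_cls G.ind_cls subst_single case_prod_beta)
  qed
  then have "?F \<in> iso (UBG n) (presented_group ?SA (artin_rels ?SA mA))"
    by (auto simp: group.iso_iff_group_isomorphisms[OF group_pres] UBG_def)
  then have "UBG n \<cong> presented_group ?SA (artin_rels ?SA mA)" by (rule is_isoI)
  moreover have "\<forall>a b. mA a b = mA b a" by (simp add: mA_def mg_sym)
  ultimately show ?thesis unfolding is_artin_group_def by blast
qed

theorem proposition1:
  fixes n :: nat
  assumes "n \<ge> 2"
  shows "(\<exists>h. h \<in> iso (BG n) (subgroup_generated (UBG n) (gU n ` Sig ` {1..<n}))
             \<and> (\<forall>i \<in> {1..<n}. h (gB n (Sig i)) = gU n (Sig i)))
    \<and> (\<exists>\<phi>. \<phi> \<in> hom (UBG n) (SGG n)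
             \<and> (\<forall>i \<in> {1..<n}. \<phi> (gU n (Sig i)) = gS n (Sig i) \<and> \<phi> (gU n (Aux i)) = gS n (Aux i)))
    \<and> (\<exists>\<phi>. \<phi> \<in> hom (UBG n) (VBG n)
             \<and> (\<forall>i \<in> {1..<n}. \<phi> (gU n (Sig i)) = gV n (Sig i) \<and> \<phi> (gU n (Aux i)) = gV n (Aux i)))
    \<and> (\<exists>\<phi>. \<phi> \<in> hom (UBG n) (BG n)
             \<and> (\<forall>i \<in> {1..<n}. \<phi> (gU n (Sig i)) = gB n (Sig i) \<and> \<phi> (gU n (Aux i)) = \<one>\<^bsub>BG n\<^esub>))
    \<and> is_artin_group (UBG n)"
  using part_iso[of n] part_SG[of n] part_VB[of n] part_B[of n] part_artin[of n] by blast

end
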